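(* For every connected graph $\hat G$ on $n$ vertices with maximum degree $\Delta$ and treewidth $\mathrm{tw}$, $$\mathrm{OPT}(\hat G)=O\big(\Delta(\Delta+\mathrm{tw}\log n)\,n\log n\big).$$
   Context: Let $\hat G=(V,\hat E)$ be a connected unweighted graph with shortest-path metric $\hat\delta$. Let $\widehat{\mathit{NE}}$ be the set of unordered pairs $\{a,b\}$ of distinct vertices with $\{a,b\}\notin\hat E$. For $(u,v)\in V^2$, let $S_{u,v}$ be the set of $\{a,b\}\in\widehat{\mathit{NE}}$ such that $\hat\delta(u,a)+\hat\delta(b,v)+1<\hat\delta(u,v)$ or $\hat\delta(u,b)+\hat\delta(a,v)+1<\hat\delta(u,v)$. Define $\mathrm{OPT}(\hat G)$ as the minimum cardinality of a set $T\subseteq V\times V$ such that $\bigcup_{(u,v)\in T}S_{u,v}=\widehat{\mathit{NE}}$. Treewidth is defined via tree decompositions: the width of a decomposition is the maximum bag size minus one. *)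

theory Defs
  imports Complex_Main
begin

definition simple_graph :: "nat set \<Rightarrow> nat set set \<Rightarrow> bool" where
  "simple_graph V E \<longleftrightarrow> finite V \<and> (\<forall>e\<in>E. \<exists>a b. e = {a, b} \<and> a \<noteq> b \<and> a \<in> V \<and> b \<in> V)"

definition is_walk :: "nat set \<Rightarrow> nat set set \<Rightarrow> nat list \<Rightarrow> bool" where
  "is_walk V E xs \<longleftrightarrow> xs \<noteq> [] \<and> set xs \<subseteq> V \<and>
     (\<forall>i. i + 1 < length xs \<longrightarrow> {xs ! i, xs ! (i + 1)} \<in> E)"

definition connected_graph :: "nat set \<Rightarrow> nat set set \<Rightarrow> bool" where
  "connected_graph V E \<longleftrightarrow> V \<noteq> {} \<and>
     (\<forall>u\<in>V. \<forall>v\<in>V. \<exists>xs. is_walk V E xs \<and> hd xs = u \<and> last xs = v)"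

definition gdist :: "nat set \<Rightarrow> nat set set \<Rightarrow> nat \<Rightarrow> nat \<Rightarrow> nat" where
  "gdist V E u v = (LEAST k. \<exists>xs. is_walk V E xs \<and> hd xs = u \<and> last xs = v \<and> length xs = k + 1)"

definition degree :: "nat set set \<Rightarrow> nat \<Rightarrow> nat" where
  "degree E u = card {v. {u, v} \<in> E}"

definition max_degree :: "nat set \<Rightarrow> nat set set \<Rightarrow> nat" where
  "max_degree V E = Max (degree E ` V)"

definition non_edges :: "nat set \<Rightarrow> nat set set \<Rightarrow> nat set set" where
  "non_edges V E = {{a, b} | a b. a \<in> V \<and> b \<in> V \<and> a \<noteq> b \<and> {a, b} \<notin> E}"

definition S_set :: "nat set \<Rightarrow> nat set set \<Rightarrow> nat \<Rightarrow> nat \<Rightarrow> nat set set" where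
  "S_set V E u v = {p \<in> non_edges V E. \<exists>a b. p = {a, b} \<and>
      (gdist V E u a + gdist V E b v + 1 < gdist V E u v \<or>
       gdist V E u b + gdist V E a v + 1 < gdist V E u v)}"

definition OPT :: "nat set \<Rightarrow> nat set set \<Rightarrow> nat" where
  "OPT V E = (LEAST m. \<exists>T. T \<subseteq> V \<times> V \<and> finite T \<and> card T = m \<and>
      (\<Union>(u, v)\<in>T. S_set V E u v) = non_edges V E)"

definition is_tree :: "nat set \<Rightarrow> nat set set \<Rightarrow> bool" where
  "is_tree I F \<longleftrightarrow> simple_graph I F \<and> connected_graph I F \<and> finite F \<and> card F + 1 = card I"

definition tree_decomposition ::
  "nat set \<Rightarrow> nat set set \<Rightarrow> nat set \<Rightarrow> nat set set \<Rightarrow> (nat \<Rightarrow> nat set) \<Rightarrow> bool" where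
  "tree_decomposition V E I F B \<longleftrightarrow> is_tree I F \<and>
     (\<Union>i\<in>I. B i) = V \<and>
     (\<forall>e\<in>E. \<exists>i\<in>I. e \<subseteq> B i) \<and>
     (\<forall>v\<in>V. connected_graph {i \<in> I. v \<in> B i} F)"

definition decomposition_width :: "nat set \<Rightarrow> (nat \<Rightarrow> nat set) \<Rightarrow> nat" where
  "decomposition_width I B = Max ((\<lambda>i. card (B i)) ` I) - 1"

definition treewidth :: "nat set \<Rightarrow> nat set set \<Rightarrow> nat" where
  "treewidth V E = (LEAST w. \<exists>I F B. tree_decomposition V E I F B \<and> decomposition_width I B = w)"

end

theory Submission
  imports Defs
begin



lemma is_walk_succ:
  "is_walk V E xs \<longleftrightarrow> xs \<noteq> [] \<and> set xs \<subseteq> V \<and> successively (\<lambda>x y. {x,y} \<in> E) xs"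
  unfolding is_walk_def successively_conv_nth by simp

lemma walk_rev: "is_walk V E xs \<Longrightarrow> is_walk V E (rev xs)"
  unfolding is_walk_succ by (auto simp: insert_commute)

lemma walk_append:
  assumes "is_walk V E xs" "is_walk V E ys" "last xs = hd ys"
  shows "is_walk V E (xs @ tl ys)"
proof -
  from assms(2) obtain y ys' where ys: "ys = y # ys'" unfolding is_walk_def by (cases ys) auto
  have "successively (\<lambda>x y. {x,y} \<in> E) (xs @ ys')"
    using assms unfolding is_walk_succ ys
    by (auto simp: successively_append_iff successively_Cons)
  then show ?thesis using assms unfolding is_walk_succ ys by auto
qed

lemma walk_take: assumes "is_walk V E xs" "0 < j" shows "is_walk V E (take j xs)"
proof -
  have "successively (\<lambda>x y. {x,y} \<in> E) (take j xs @ drop j xs)" using assms by (simp add: is_walk_succ)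
  then have "successively (\<lambda>x y. {x,y} \<in> E) (take j xs)" by (simp only: successively_append_iff)
  then show ?thesis using assms unfolding is_walk_succ by (auto dest: in_set_takeD)
qed

lemma walk_drop: assumes "is_walk V E xs" "j < length xs" shows "is_walk V E (drop j xs)"
proof -
  have "successively (\<lambda>x y. {x,y} \<in> E) (take j xs @ drop j xs)" using assms by (simp add: is_walk_succ)
  then have "successively (\<lambda>x y. {x,y} \<in> E) (drop j xs)" by (simp only: successively_append_iff)
  then show ?thesis using assms unfolding is_walk_succ by (auto dest: in_set_dropD)
qed

lemma gdist_le:
  assumes "is_walk V E xs" "hd xs = u" "last xs = v"
  shows "gdist V E u v \<le> length xs - 1"
  unfolding gdist_def
  apply (rule Least_le) using assms by (intro exI[of _ xs]) (auto simp: is_walk_def)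

lemma gdist_ex:
  assumes "connected_graph V E" "u \<in> V" "v \<in> V"
  shows "\<exists>xs. is_walk V E xs \<and> hd xs = u \<and> last xs = v \<and> length xs = gdist V E u v + 1"
proof -
  from assms obtain xs where xs: "is_walk V E xs" "hd xs = u" "last xs = v"
    unfolding connected_graph_def by blast
  then have "\<exists>k xs. is_walk V E xs \<and> hd xs = u \<and> last xs = v \<and> length xs = k + 1"
    by (intro exI[of _ "length xs - 1"] exI[of _ xs]) (auto simp: is_walk_def)
  then show ?thesis unfolding gdist_def by (rule LeastI_ex)
qed

lemma gdist_sym_le:
  assumes "connected_graph V E" "u \<in> V" "v \<in> V"
  shows "gdist V E v u \<le> gdist V E u v"
proof -
  obtain xs where xs: "is_walk V E xs" "hd xs = u" "last xs = v" "length xs = gdist V E u v + 1"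
    using gdist_ex[OF assms] by blast
  have "xs \<noteq> []" using xs by (auto simp: is_walk_def)
  then show ?thesis using gdist_le[OF walk_rev[OF xs(1)]] xs by (simp add: hd_rev last_rev)
qed

lemma gdist_sym:
  assumes "connected_graph V E" "u \<in> V" "v \<in> V"
  shows "gdist V E v u = gdist V E u v"
  using gdist_sym_le[OF assms] gdist_sym_le[OF assms(1,3,2)] by simp

lemma gdist_tri:
  assumes "connected_graph V E" "u \<in> V" "v \<in> V" "w \<in> V"
  shows "gdist V E u w \<le> gdist V E u v + gdist V E v w"
proof -
  obtain xs where xs: "is_walk V E xs" "hd xs = u" "last xs = v" "length xs = gdist V E u v + 1"
    using gdist_ex[OF assms(1,2,3)] by blast
  obtain ys where ys: "is_walk V E ys" "hd ys = v" "last ys = w" "length ys = gdist V E v w + 1"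
    using gdist_ex[OF assms(1,3,4)] by blast
  have w: "is_walk V E (xs @ tl ys)" using walk_append xs ys by simp
  have "xs \<noteq> []" "ys \<noteq> []" using xs ys by (auto simp: is_walk_def)
  then have "hd (xs @ tl ys) = u" "last (xs @ tl ys) = w"
    using xs ys by (auto simp: last_append last_tl hd_append)
       (metis last_ConsL list.collapse)
  from gdist_le[OF w this] show ?thesis using xs ys by simp
qed

lemma gdist_ge2:
  assumes "connected_graph V E" "a \<in> V" "b \<in> V" "a \<noteq> b" "{a,b} \<notin> E"
  shows "2 \<le> gdist V E a b"
proof (rule ccontr)
  assume neg: "\<not> 2 \<le> gdist V E a b"
  obtain xs where "is_walk V E xs" "hd xs = a" "last xs = b" "length xs = gdist V E a b + 1"
    using gdist_ex[OF assms(1-3)] by blast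
  then have xs: "is_walk V E xs" "hd xs = a" "last xs = b" "length xs \<le> 2" using neg by auto
  have "xs \<noteq> []" using xs by (auto simp: is_walk_def)
  then consider "length xs = 1" | "length xs = 2" using xs(4) by (cases "length xs"; cases "length xs - 1") auto
  then show False
  proof cases
    case 1 then obtain x where "xs = [x]" by (cases xs) auto
    then show False using xs assms by auto
  next
    case 2 then obtain x y where "xs = [x,y]" by (cases xs; cases "tl xs") auto
    then show False using xs assms by (auto simp: is_walk_def)
  qed
qed





definition rel :: "nat set \<Rightarrow> nat set set \<Rightarrow> nat \<Rightarrow> nat \<Rightarrow> bool" where
  "rel X F x y \<longleftrightarrow> x \<in> X \<and> y \<in> X \<and> {x,y} \<in> F"

definition conn :: "nat set \<Rightarrow> nat set set \<Rightarrow> bool" where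
  "conn X F \<longleftrightarrow> X \<noteq> {} \<and> (\<forall>x\<in>X. \<forall>y\<in>X. (rel X F)\<^sup>*\<^sup>* x y)"

definition mytree :: "nat set \<Rightarrow> nat set set \<Rightarrow> bool" where
  "mytree I F \<longleftrightarrow> finite I \<and> (\<forall>e\<in>F. \<exists>a b. e={a,b} \<and> a\<noteq>b \<and> a\<in>I \<and> b\<in>I) \<and> conn I F
     \<and> finite F \<and> card F + 1 = card I"

lemma walk_reach_aux:
  "xs \<noteq> [] \<Longrightarrow> set xs \<subseteq> X \<Longrightarrow> successively (\<lambda>x y. {x,y} \<in> F) xs \<Longrightarrow> (rel X F)\<^sup>*\<^sup>* (hd xs) (last xs)"
proof (induction xs)
  case Nil then show ?case by simp
next
  case (Cons x xs)
  show ?case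
  proof (cases xs)
    case Nil then show ?thesis by simp
  next
    case (Cons y ys)
    with Cons.prems have "rel X F x y" by (auto simp: rel_def)
    moreover have "(rel X F)\<^sup>*\<^sup>* y (last xs)" using Cons.IH Cons.prems \<open>xs = y # ys\<close> by auto
    ultimately show ?thesis using \<open>xs = y # ys\<close> by (auto intro: converse_rtranclp_into_rtranclp)
  qed
qed

lemma walk_reach: "is_walk X F xs \<Longrightarrow> (rel X F)\<^sup>*\<^sup>* (hd xs) (last xs)"
  using walk_reach_aux unfolding is_walk_succ by blast

lemma walk_reach_nth: assumes "is_walk X F xs" "j < length xs" shows "(rel X F)\<^sup>*\<^sup>* (hd xs) (xs ! j)"
proof -
  have w: "is_walk X F (take (Suc j) xs)" using walk_take[OF assms(1)] by simp
  have "xs \<noteq> []" using assms by auto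
  have "last (take (Suc j) xs) = xs ! j" using assms(2) by (simp add: take_Suc_conv_app_nth)
  moreover have "hd (take (Suc j) xs) = hd xs" using \<open>xs \<noteq> []\<close> by (cases xs) auto
  ultimately show ?thesis using walk_reach[OF w] by simp
qed

lemma connected_conn: "connected_graph X F \<Longrightarrow> conn X F"
  unfolding connected_graph_def conn_def using walk_reach by fastforce

lemma is_tree_mytree: "is_tree I F \<Longrightarrow> mytree I F"
  unfolding is_tree_def mytree_def simple_graph_def using connected_conn by blast

lemma rel_mono: "X \<subseteq> Y \<Longrightarrow> (rel X F)\<^sup>*\<^sup>* x y \<Longrightarrow> (rel Y F)\<^sup>*\<^sup>* x y"
  by (erule rtranclp_mono[THEN predicate2D, rotated]) (auto simp: rel_def)

lemma card_incident: "finite F \<Longrightarrow> card {e\<in>F. i\<in>e} = (\<Sum>e\<in>F. if i \<in> e then 1 else 0)"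
  by (simp add: sum.If_cases Int_def)

lemma degree_sum:
  assumes "finite I" "finite F" "\<forall>e\<in>F. \<exists>a b. e={a,b} \<and> a\<noteq>b \<and> a\<in>I \<and> b\<in>I"
  shows "(\<Sum>i\<in>I. card {e\<in>F. i\<in>e}) = 2 * card F"
proof -
  have "(\<Sum>i\<in>I. card {e\<in>F. i\<in>e}) = (\<Sum>i\<in>I. \<Sum>e\<in>F. if i \<in> e then 1 else 0)"
    using card_incident[OF assms(2)] by simp
  also have "\<dots> = (\<Sum>e\<in>F. \<Sum>i\<in>I. if i \<in> e then 1 else 0)" by (rule sum.swap)
  also have "\<dots> = (\<Sum>e\<in>F. 2)"
  proof (rule sum.cong[OF refl])
    fix e assume "e \<in> F"
    then obtain a b where e: "e = {a,b}" "a \<noteq> b" "a \<in> I" "b \<in> I" using assms(3) by blast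
    have "(\<Sum>i\<in>I. if i \<in> e then 1 else 0) = card (I \<inter> e)"
      using assms(1) by (simp add: sum.If_cases Int_def)
    also have "I \<inter> e = {a,b}" using e by auto
    finally show "(\<Sum>i\<in>I. if i \<in> e then 1 else 0) = (2::nat)" using e by simp
  qed
  finally show ?thesis by simp
qed

lemma leaf_exists:
  assumes "mytree I F" "2 \<le> card I"
  shows "\<exists>l p. l \<in> I \<and> {l,p} \<in> F \<and> l \<noteq> p \<and> (\<forall>q. {l,q} \<in> F \<longrightarrow> q = p)"
proof -
  have fin: "finite I" "finite F" and ed: "\<forall>e\<in>F. \<exists>a b. e={a,b} \<and> a\<noteq>b \<and> a\<in>I \<and> b\<in>I"
    and cn: "conn I F" and cd: "card F + 1 = card I" using assms unfolding mytree_def by auto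
  have ge1: "1 \<le> card {e\<in>F. i\<in>e}" if "i \<in> I" for i
  proof -
    obtain j where "j \<in> I" "j \<noteq> i"
    proof (rule ccontr)
      assume "\<not> thesis"
      then have "I \<subseteq> {i}" using that by blast
      then have "card I \<le> card {i}" using card_mono[of "{i}" I] by simp
      then have "card I \<le> 1" by simp
      then show False using assms(2) by simp
    qed
    then have "(rel I F)\<^sup>*\<^sup>* i j" using cn that unfolding conn_def by blast
    then obtain z where "rel I F i z" using \<open>j \<noteq> i\<close> by (blast elim: converse_rtranclpE)
    then have "{i,z} \<in> {e\<in>F. i\<in>e}" by (auto simp: rel_def)
    then have "{e\<in>F. i\<in>e} \<noteq> {}" by blast
    moreover have "finite {e\<in>F. i\<in>e}" using fin(2) by simp
    ultimately show ?thesis by (simp add: Suc_le_eq card_gt_0_iff)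
  qed
  have "\<exists>l\<in>I. card {e\<in>F. l\<in>e} < 2"
  proof (rule ccontr)
    assume "\<not> ?thesis"
    then have "(\<Sum>i\<in>I. 2) \<le> (\<Sum>i\<in>I. card {e\<in>F. i\<in>e})" by (intro sum_mono) (auto simp: not_less)
    then show False using degree_sum[OF fin ed] cd by simp
  qed
  then obtain l where l0: "l \<in> I" "card {e\<in>F. l\<in>e} < 2" by blast
  then have l: "l \<in> I" "card {e\<in>F. l\<in>e} = 1" using ge1[OF l0(1)] by auto
  then obtain e0 where e0: "{e\<in>F. l\<in>e} = {e0}" by (meson card_1_singletonE)
  then have "e0 \<in> F" "l \<in> e0" by auto
  then obtain a b where ab: "e0 = {a,b}" "a \<noteq> b" using ed by blast
  define p where "p = (if l = a then b else a)"
  have p: "e0 = {l,p}" "l \<noteq> p" using \<open>l \<in> e0\<close> ab unfolding p_def by auto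
  have "\<forall>q. {l,q} \<in> F \<longrightarrow> q = p"
  proof (intro allI impI)
    fix q assume "{l,q} \<in> F"
    then have "{l,q} \<in> {e\<in>F. l\<in>e}" by simp
    then have "{l,q} = {l,p}" using e0 p by simp
    then show "q = p" using p by (metis doubleton_eq_iff)
  qed
  then show ?thesis using l p \<open>e0 \<in> F\<close> by blast
qed

lemma mytree_edge_sub0: "mytree I F \<Longrightarrow> e \<in> F \<Longrightarrow> e \<subseteq> I"
  unfolding mytree_def by fastforce

context
  fixes I F l p
  assumes tr: "mytree I F" and lI: "l \<in> I" and lp: "{l,p} \<in> F" "l \<noteq> p"
    and uniq: "\<forall>q. {l,q} \<in> F \<longrightarrow> q = p"
begin

lemma edge_l: "{l,q} \<in> F \<Longrightarrow> q = p" using uniq by blast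
lemma edge_l': "{q,l} \<in> F \<Longrightarrow> q = p" using uniq by (simp add: insert_commute)

lemma no_loop: "{x} \<notin> F"
proof
  assume "{x} \<in> F"
  then obtain a b where "{x} = {a,b}" "a \<noteq> b" using tr unfolding mytree_def by blast
  moreover from this(1) have "a = x" "b = x" by auto
  ultimately show False by simp
qed

lemma shortcut:
  assumes "(rel Y F)\<^sup>*\<^sup>* a b" "a \<noteq> l"
  shows "(b \<noteq> l \<longrightarrow> (rel (Y-{l}) (F - {{l,p}}))\<^sup>*\<^sup>* a b) \<and> (b = l \<longrightarrow> (rel (Y-{l}) (F - {{l,p}}))\<^sup>*\<^sup>* a p)"
  using assms(1)
proof (induction rule: rtranclp_induct)
  case base then show ?case using assms(2) by simp
next
  case (step b c)
  have bc: "b \<in> Y" "c \<in> Y" "{b,c} \<in> F" using step.hyps(2) by (auto simp: rel_def)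
  show ?case
  proof (cases "c = l")
    case True
    then have "b \<noteq> l" using bc no_loop by auto
    moreover have "b = p" using bc True edge_l' by simp
    ultimately show ?thesis using step.IH True by simp
  next
    case False
    show ?thesis
    proof (cases "b = l")
      case True
      then have "c = p" using bc edge_l by simp
      then show ?thesis using step.IH True False by simp
    next
      case bF: False
      have "{b,c} \<noteq> {l,p}" using bF False by (metis doubleton_eq_iff)
      then have "rel (Y-{l}) (F - {{l,p}}) b c" using bc bF False by (auto simp: rel_def)
      then show ?thesis using step.IH bF False by (meson rtranclp.rtrancl_into_rtrancl)
    qed
  qed
qed

lemma shortcut_conn:
  assumes "conn X F" "X - {l} \<noteq> {}"
  shows "conn (X - {l}) (F - {{l,p}})"
  unfolding conn_def
proof (intro conjI ballI)
  show "X - {l} \<noteq> {}" by fact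
  fix x y assume xy: "x \<in> X - {l}" "y \<in> X - {l}"
  then have "(rel X F)\<^sup>*\<^sup>* x y" using assms(1) unfolding conn_def by blast
  from shortcut[OF this] xy show "(rel (X - {l}) (F - {{l, p}}))\<^sup>*\<^sup>* x y" by blast
qed

lemma leaf_nbr_in: "conn X F \<Longrightarrow> l \<in> X \<Longrightarrow> y \<in> X \<Longrightarrow> y \<noteq> l \<Longrightarrow> p \<in> X"
  unfolding conn_def by (metis converse_rtranclpE edge_l rel_def)

lemma remove_leaf: "mytree (I - {l}) (F - {{l,p}})"
proof -
  have fin: "finite I" "finite F" and ed: "\<forall>e\<in>F. \<exists>a b. e={a,b} \<and> a\<noteq>b \<and> a\<in>I \<and> b\<in>I"
    and cn: "conn I F" and cd: "card F + 1 = card I" using tr unfolding mytree_def by auto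
  have pI: "p \<in> I" using ed lp by (metis doubleton_eq_iff)
  have ed': "\<forall>e\<in>F - {{l,p}}. \<exists>a b. e={a,b} \<and> a\<noteq>b \<and> a\<in>I-{l} \<and> b\<in>I-{l}"
  proof
    fix e assume e: "e \<in> F - {{l,p}}"
    then obtain a b where ab: "e={a,b}" "a\<noteq>b" "a\<in>I" "b\<in>I" using ed by blast
    have "a \<noteq> l" using e ab edge_l by auto
    moreover have "b \<noteq> l" using e ab edge_l' by auto
    ultimately show "\<exists>a b. e={a,b} \<and> a\<noteq>b \<and> a\<in>I-{l} \<and> b\<in>I-{l}" using ab by blast
  qed
  have cn': "conn (I - {l}) (F - {{l,p}})"
    unfolding conn_def
  proof
    show "I - {l} \<noteq> {}" using pI lp by auto
    show "\<forall>x\<in>I - {l}. \<forall>y\<in>I - {l}. (rel (I - {l}) (F - {{l, p}}))\<^sup>*\<^sup>* x y"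
      using shortcut cn unfolding conn_def by blast
  qed
  have "card F > 0" using lp fin by (auto simp: card_gt_0_iff)
  then have "card (F - {{l,p}}) + 1 = card (I - {l})" using cd fin lp lI by (simp add: card_Diff_singleton)
  then show ?thesis unfolding mytree_def using fin ed' cn' by auto
qed

lemma leafmap1: assumes "conn X F" "X \<subseteq> I" "l \<notin> X" shows
   "X - {l} \<union> (if l \<in> X then {p} else {}) \<subseteq> I - {l} \<and> conn (X - {l} \<union> (if l \<in> X then {p} else {})) (F - {{l,p}})"
proof -
  have e: "X - {l} \<union> (if l \<in> X then {p} else {}) = X - {l}" using assms(3) by simp
  have "X - {l} \<noteq> {}" using assms unfolding conn_def by simp
  then have "conn (X - {l}) (F - {{l,p}})" by (rule shortcut_conn[OF assms(1)])
  then show ?thesis unfolding e using assms(2) by blast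
qed

lemma leafmap2: assumes "X = {l}" shows
   "X - {l} \<union> (if l \<in> X then {p} else {}) \<subseteq> I - {l} \<and> conn (X - {l} \<union> (if l \<in> X then {p} else {})) (F - {{l,p}})"
proof -
  have e: "X - {l} \<union> (if l \<in> X then {p} else {}) = {p}" using assms by simp
  have pI: "p \<in> I" using mytree_edge_sub0[OF tr lp(1)] by simp
  have "conn {p} (F - {{l,p}})" unfolding conn_def by simp
  then show ?thesis unfolding e using pI lp by simp
qed

lemma leafmap3: assumes "conn X F" "X \<subseteq> I" "l \<in> X" "X \<noteq> {l}" shows
   "X - {l} \<union> (if l \<in> X then {p} else {}) \<subseteq> I - {l} \<and> conn (X - {l} \<union> (if l \<in> X then {p} else {})) (F - {{l,p}})"
proof -
  have "X - {l} \<noteq> {}"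
  proof
    assume "X - {l} = {}"
    then have "X \<subseteq> {l}" by blast
    then show False using assms(3,4) by (simp add: subset_singleton_iff)
  qed
  then obtain y where y: "y \<in> X" "y \<noteq> l" by blast
  have "p \<in> X" by (rule leaf_nbr_in[OF assms(1,3) y])
  then have e: "X - {l} \<union> (if l \<in> X then {p} else {}) = X - {l}" using assms(3) lp by auto
  have "conn (X - {l}) (F - {{l,p}})" by (rule shortcut_conn[OF assms(1) \<open>X - {l} \<noteq> {}\<close>])
  then show ?thesis unfolding e using assms(2) by blast
qed

lemma leafmap: "conn X F \<Longrightarrow> X \<subseteq> I \<Longrightarrow>
   X - {l} \<union> (if l \<in> X then {p} else {}) \<subseteq> I - {l} \<and> conn (X - {l} \<union> (if l \<in> X then {p} else {})) (F - {{l,p}})"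
  using leafmap1[of X] leafmap2[of X] leafmap3[of X] by blast

end

lemma mytree_edge_sub: "mytree I F \<Longrightarrow> e \<in> F \<Longrightarrow> e \<subseteq> I"
  unfolding mytree_def by fastforce

lemma helly:
  assumes "mytree I F" "\<forall>X\<in>\<X>. X \<subseteq> I \<and> conn X F" "\<forall>X\<in>\<X>. \<forall>Y\<in>\<X>. X \<inter> Y \<noteq> {}"
  shows "\<exists>k\<in>I. \<forall>X\<in>\<X>. k \<in> X"
  using assms
proof (induction "card I" arbitrary: I F \<X> rule: less_induct)
  case less
  have fin: "finite I" and cn: "conn I F" using less.prems unfolding mytree_def by auto
  show ?case
  proof (cases "card I < 2")
    case True
    have "card I \<noteq> 0" using fin cn by (simp add: conn_def)
    then have "card I = 1" using True by arith
    then obtain k where "I = {k}" by (meson card_1_singletonE)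
    then show ?thesis using less.prems unfolding conn_def by blast
  next
    case False
    then have c2: "2 \<le> card I" by simp
    obtain l p where lp: "l \<in> I" "{l,p} \<in> F" "l \<noteq> p" "\<forall>q. {l,q} \<in> F \<longrightarrow> q = p"
      using leaf_exists[OF less.prems(1) c2] by blast
    have "{l,p} \<subseteq> I" using less.prems(1) lp(2) by (rule mytree_edge_sub)
    then have pI: "p \<in> I" by simp
    define f where "f X = X - {l} \<union> (if l \<in> X then {p} else {})" for X
    have tr': "mytree (I - {l}) (F - {{l,p}})" using remove_leaf[OF less.prems(1) lp] .
    have fX: "f X \<subseteq> I - {l} \<and> conn (f X) (F - {{l,p}})" if X: "X \<in> \<X>" for X
      unfolding f_def using X less.prems(2) leafmap[OF less.prems(1) lp] by blast
    have inter: "\<forall>X\<in>f ` \<X>. \<forall>Y\<in>f ` \<X>. X \<inter> Y \<noteq> {}"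
    proof clarify
      fix X Y assume "X \<in> \<X>" "Y \<in> \<X>" "f X \<inter> f Y = {}"
      then obtain z where "z \<in> X" "z \<in> Y" using less.prems(3) by blast
      then show False using \<open>f X \<inter> f Y = {}\<close> unfolding f_def by (cases "z = l") auto
    qed
    have lt: "card (I - {l}) < card I" using lp fin by (meson card_Diff1_less)
    have fX': "\<forall>X\<in>f ` \<X>. X \<subseteq> I - {l} \<and> conn X (F - {{l,p}})" using fX by blast
    from less.hyps[OF lt tr' fX' inter] obtain k where k: "k \<in> I - {l}" "\<forall>X\<in>f ` \<X>. k \<in> X"
      by blast
    show ?thesis
    proof (cases "k = p \<and> (\<exists>X0\<in>\<X>. p \<notin> X0)")
      case True
      then obtain X0 where X0: "X0 \<in> \<X>" "p \<notin> X0" by blast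
      then have "l \<in> X0" using k True unfolding f_def by (auto split: if_splits)
      have "X0 = {l}"
      proof (rule ccontr)
        assume "X0 \<noteq> {l}"
        have "X0 - {l} \<noteq> {}"
        proof
          assume "X0 - {l} = {}"
          then have "X0 \<subseteq> {l}" by blast
          then show False using \<open>X0 \<noteq> {l}\<close> \<open>l \<in> X0\<close> by (simp add: subset_singleton_iff)
        qed
        then obtain y where "y \<in> X0" "y \<noteq> l" by blast
        then show False using leaf_nbr_in[OF less.prems(1) lp] less.prems(2) X0 \<open>l \<in> X0\<close> by blast
      qed
      then have "\<forall>X\<in>\<X>. l \<in> X" using less.prems(3) X0 by blast
      then show ?thesis using lp by blast
    next
      case False
      have "\<forall>X\<in>\<X>. k \<in> X"
      proof
        fix X assume "X \<in> \<X>"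
        then have "k \<in> f X" using k by blast
        then show "k \<in> X" using False k \<open>X \<in> \<X>\<close> unfolding f_def by (auto split: if_splits)
      qed
      then show ?thesis using k by blast
    qed
  qed
qed





lemma rel_sym: "(rel X F)\<^sup>*\<^sup>* a b \<Longrightarrow> (rel X F)\<^sup>*\<^sup>* b a"
proof (induction rule: rtranclp_induct)
  case base then show ?case by simp
next
  case (step b c)
  then have "rel X F c b" by (auto simp: rel_def insert_commute)
  then show ?case using step.IH by (rule converse_rtranclp_into_rtranclp)
qed

definition cls :: "nat set set \<Rightarrow> nat set \<Rightarrow> nat \<Rightarrow> nat set" where
  "cls E W x = {y. (rel W E)\<^sup>*\<^sup>* x y}"

lemma rel_in: "(rel W E)\<^sup>*\<^sup>* x y \<Longrightarrow> x \<in> W \<Longrightarrow> y \<in> W"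
  by (induction rule: rtranclp_induct) (auto simp: rel_def)

lemma cls_sub: "x \<in> W \<Longrightarrow> cls E W x \<subseteq> W"
  unfolding cls_def using rel_in by blast

lemma cls_self: "x \<in> cls E W x" unfolding cls_def by simp

context
  fixes V E I F B w
  assumes td: "tree_decomposition V E I F B" and wd: "\<forall>i\<in>I. card (B i) \<le> w + 1"
    and finV: "finite V"
begin

lemma td_tree: "mytree I F" using td unfolding tree_decomposition_def by (blast intro: is_tree_mytree)
lemma td_cover: "v \<in> V \<Longrightarrow> \<exists>i\<in>I. v \<in> B i" using td unfolding tree_decomposition_def by blast
lemma td_edge: "e \<in> E \<Longrightarrow> \<exists>i\<in>I. e \<subseteq> B i" using td unfolding tree_decomposition_def by blast
lemma td_conn: "v \<in> V \<Longrightarrow> conn {i\<in>I. v \<in> B i} F"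
  using td unfolding tree_decomposition_def by (blast intro: connected_conn)
lemma td_bag: "i \<in> I \<Longrightarrow> B i \<subseteq> V" using td unfolding tree_decomposition_def by blast

lemma conn_X:
  assumes W: "W \<subseteq> V" "x \<in> W"
  shows "conn {j\<in>I. B j \<inter> cls E W x \<noteq> {}} F"
proof -
  define X where "X = {j\<in>I. B j \<inter> cls E W x \<noteq> {}}"
  have xV: "x \<in> V" using W by blast
  obtain j0 where j0: "j0 \<in> I" "x \<in> B j0" using td_cover[OF xV] by blast
  have TX: "{j\<in>I. v \<in> B j} \<subseteq> X" if "v \<in> cls E W x" for v using that unfolding X_def by blast
  have main: "\<forall>j\<in>{j\<in>I. v \<in> B j}. (rel X F)\<^sup>*\<^sup>* j0 j" if "(rel W E)\<^sup>*\<^sup>* x v" for v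
    using that
  proof (induction rule: rtranclp_induct)
    case base
    show ?case
    proof
      fix j assume "j \<in> {j\<in>I. x \<in> B j}"
      then have "(rel {j\<in>I. x \<in> B j} F)\<^sup>*\<^sup>* j0 j" using td_conn[OF xV] j0 unfolding conn_def by blast
      then show "(rel X F)\<^sup>*\<^sup>* j0 j" by (rule rel_mono[OF TX[OF cls_self]])
    qed
  next
    case (step v v')
    have e: "{v,v'} \<in> E" "v \<in> W" "v' \<in> W" using step.hyps(2) by (auto simp: rel_def)
    obtain j1 where j1: "j1 \<in> I" "{v,v'} \<subseteq> B j1" using td_edge[OF e(1)] by blast
    have r1: "(rel X F)\<^sup>*\<^sup>* j0 j1" using step.IH j1 by blast
    have "(rel W E)\<^sup>*\<^sup>* x v'" using step.hyps(1,2) by (rule rtranclp.rtrancl_into_rtrancl)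
    then have v'C: "v' \<in> cls E W x" unfolding cls_def by simp
    have v'V: "v' \<in> V" using e W by blast
    show ?case
    proof
      fix j assume j: "j \<in> {j\<in>I. v' \<in> B j}"
      have "(rel {j\<in>I. v' \<in> B j} F)\<^sup>*\<^sup>* j1 j" using td_conn[OF v'V] j1 j unfolding conn_def by blast
      then have "(rel X F)\<^sup>*\<^sup>* j1 j" by (rule rel_mono[OF TX[OF v'C]])
      then show "(rel X F)\<^sup>*\<^sup>* j0 j" using r1 by simp
    qed
  qed
  have reach: "(rel X F)\<^sup>*\<^sup>* j0 j" if jX: "j \<in> X" for j
  proof -
    obtain v where v: "j \<in> I" "v \<in> B j" "v \<in> cls E W x" using jX unfolding X_def by blast
    then show ?thesis using main[of v] unfolding cls_def by blast
  qed
  have "j0 \<in> X" unfolding X_def using j0 cls_self[of x E W] by blast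
  then have "X \<noteq> {}" by blast
  moreover have "\<forall>a\<in>X. \<forall>b\<in>X. (rel X F)\<^sup>*\<^sup>* a b"
  proof (intro ballI)
    fix a b assume "a \<in> X" "b \<in> X"
    show "(rel X F)\<^sup>*\<^sup>* a b" using rtranclp_trans[OF rel_sym[OF reach[OF \<open>a \<in> X\<close>]] reach[OF \<open>b \<in> X\<close>]] .
  qed
  ultimately show ?thesis unfolding conn_def X_def by blast
qed

lemma separator:
  assumes U: "U \<subseteq> V"
  shows "\<exists>S\<subseteq>U. card S \<le> w + 1 \<and> (\<forall>x\<in>U - S. 2 * card (cls E (U - S) x) \<le> card U)"
proof (rule ccontr)
  assume neg: "\<not> ?thesis"
  have finU: "finite U" using U finV finite_subset by blast
  have bad: "\<exists>x\<in>U - B i. card U < 2 * card (cls E (U - B i) x)" if i: "i \<in> I" for i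
  proof -
    have fB: "finite (B i)" using td_bag[OF i] finV finite_subset by blast
    have "card (U \<inter> B i) \<le> card (B i)" using card_mono[OF fB, of "U \<inter> B i"] by blast
    then have c: "card (U \<inter> B i) \<le> w + 1" using wd i by force
    have s: "U \<inter> B i \<subseteq> U" by blast
    have e: "U - (U \<inter> B i) = U - B i" by blast
    have "\<not> (\<forall>x\<in>U - (U \<inter> B i). 2 * card (cls E (U - (U \<inter> B i)) x) \<le> card U)"
      using neg s c by blast
    then show ?thesis unfolding e by (simp add: not_le)
  qed
  define xs where "xs i = (SOME x. x \<in> U - B i \<and> card U < 2 * card (cls E (U - B i) x))" for i
  have xs: "xs i \<in> U - B i \<and> card U < 2 * card (cls E (U - B i) (xs i))" if iI: "i \<in> I" for i
  proof -
    obtain x where "x \<in> U - B i \<and> card U < 2 * card (cls E (U - B i) x)" using bad[OF iI] by blast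
    then show ?thesis unfolding xs_def by (rule someI)
  qed
  define C where "C i = cls E (U - B i) (xs i)" for i
  have CU: "C i \<subseteq> U - B i" if "i \<in> I" for i unfolding C_def using cls_sub xs[OF that] by blast
  define X where "X i = {j\<in>I. B j \<inter> C i \<noteq> {}}" for i
  have h: "\<exists>k\<in>I. \<forall>Y\<in>X ` I. k \<in> Y"
  proof (rule helly[OF td_tree])
    show "\<forall>Y\<in>X ` I. Y \<subseteq> I \<and> conn Y F"
    proof
      fix Y assume "Y \<in> X ` I"
      then obtain i where i: "i \<in> I" "Y = X i" by blast
      have "conn (X i) F" unfolding X_def C_def by (rule conn_X) (use U xs[OF i(1)] in auto)
      then show "Y \<subseteq> I \<and> conn Y F" using i unfolding X_def by blast
    qed
    show "\<forall>Y\<in>X ` I. \<forall>Z\<in>X ` I. Y \<inter> Z \<noteq> {}"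
    proof clarify
      fix i j assume ij: "i \<in> I" "j \<in> I" "X i \<inter> X j = {}"
      have "C i \<inter> C j \<noteq> {}"
      proof
        assume d: "C i \<inter> C j = {}"
        have f: "finite (C i)" "finite (C j)" using CU ij finU finite_subset by blast+
        have "card (C i \<union> C j) = card (C i) + card (C j)" using card_Un_disjoint[OF f d] .
        moreover have "card (C i \<union> C j) \<le> card U" using CU ij finU by (intro card_mono) auto
        moreover have "card U < 2 * card (C i)" "card U < 2 * card (C j)" using xs ij unfolding C_def by auto
        ultimately show False by linarith
      qed
      then obtain v where v: "v \<in> C i" "v \<in> C j" by blast
      then have "v \<in> V" using CU ij U by blast
      then obtain k where "k \<in> I" "v \<in> B k" using td_cover by blast
      then have "k \<in> X i \<inter> X j" using v unfolding X_def by blast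
      then show False using ij by blast
    qed
  qed
  then obtain k where k: "k \<in> I" "k \<in> X k" by blast
  then show False using CU[OF k(1)] unfolding X_def by blast
qed

end




lemma gdist_self: "a \<in> V \<Longrightarrow> gdist V E a a = 0"
  using gdist_le[of V E "[a]" a a] by (simp add: is_walk_def)

lemma nonedge_in: "a \<in> V \<Longrightarrow> b \<in> V \<Longrightarrow> a \<noteq> b \<Longrightarrow> {a,b} \<notin> E \<Longrightarrow> {a,b} \<in> non_edges V E"
  unfolding non_edges_def by blast

lemma geo_pos:
  assumes cg: "connected_graph V E" and P: "is_walk V E P" "hd P = a" "last P = b"
    "length P = gdist V E a b + 1" and j: "j < length P"
  shows "gdist V E a (P ! j) = j \<and> gdist V E (P ! j) b = gdist V E a b - j"
proof -
  define d where "d = gdist V E a b"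
  have Pne: "P \<noteq> []" using P by (auto simp: is_walk_def)
  have PV: "set P \<subseteq> V" using P by (auto simp: is_walk_def)
  have aV: "a \<in> V" using P Pne PV by (metis hd_in_set subsetD)
  have bV: "b \<in> V" using P Pne PV by (metis last_in_set subsetD)
  have pjV: "P ! j \<in> V" using PV j by (meson nth_mem subsetD)
  have w1: "is_walk V E (take (Suc j) P)" using walk_take[OF P(1)] by simp
  have "last (take (Suc j) P) = P ! j" using j by (simp add: take_Suc_conv_app_nth)
  moreover have "hd (take (Suc j) P) = a" using Pne P(2) by (cases P) auto
  ultimately have g1: "gdist V E a (P ! j) \<le> j" using gdist_le[OF w1] j by simp
  have w2: "is_walk V E (drop j P)" using walk_drop[OF P(1) j] .
  have "hd (drop j P) = P ! j" using j by (simp add: hd_drop_conv_nth)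
  moreover have "last (drop j P) = b" using j P(3) by simp
  ultimately have g2: "gdist V E (P ! j) b \<le> d - j" using gdist_le[OF w2] j P(4) unfolding d_def by simp
  have "d \<le> gdist V E a (P ! j) + gdist V E (P ! j) b" unfolding d_def by (rule gdist_tri[OF cg aV pjV bV])
  then show ?thesis using g1 g2 j P(4) unfolding d_def by linarith
qed

definition nb :: "nat set set \<Rightarrow> nat \<Rightarrow> nat set" where
  "nb E s = insert s {v. {s,v} \<in> E}"

lemma geo_cover:
  assumes cg: "connected_graph V E" and P: "is_walk V E P" "hd P = a" "last P = b"
    "length P = gdist V E a b + 1" and ab: "a \<noteq> b" "{a,b} \<notin> E" and k: "k < length P"
  shows "\<exists>s'\<in>nb E (P ! k). {a,b} \<in> S_set V E a s' \<or> {a,b} \<in> S_set V E s' b"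
proof -
  define d where "d = gdist V E a b"
  have Pne: "P \<noteq> []" using P by (auto simp: is_walk_def)
  have PV: "set P \<subseteq> V" using P by (auto simp: is_walk_def)
  have aV: "a \<in> V" using P Pne PV by (metis hd_in_set subsetD)
  have bV: "b \<in> V" using P Pne PV by (metis last_in_set subsetD)
  have d2: "2 \<le> d" unfolding d_def by (rule gdist_ge2[OF cg aV bV ab])
  have ne: "{a,b} \<in> non_edges V E" using nonedge_in[OF aV bV ab] .
  have len: "length P = d + 1" using P(4) unfolding d_def .
  have pos: "gdist V E a (P ! j) = j \<and> gdist V E (P ! j) b = d - j" if "j < length P" for j
    using geo_pos[OF cg P that] unfolding d_def .
  have Pa: "P ! 0 = a" using Pne P(2) by (simp add: hd_conv_nth)
  have Pb: "P ! d = b" using Pne P(3) len by (simp add: last_conv_nth)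
  have edge: "{P ! j, P ! Suc j} \<in> E" if "Suc j < length P" for j
    using P(1) that unfolding is_walk_def by simp
  have ab_cov: "{a,b} \<in> S_set V E a b"
    unfolding S_set_def using ne d2 gdist_self[OF aV] gdist_self[OF bV] unfolding d_def by force
  show ?thesis
  proof (cases "d \<le> 2 * k")
    case True
    show ?thesis
    proof (cases "k = d")
      case True
      then have "b \<in> nb E (P ! k)" using Pb by (simp add: nb_def)
      then show ?thesis using ab_cov by blast
    next
      case False
      then have k1: "Suc k < length P" using k len by simp
      define s' where "s' = P ! Suc k"
      have s'V: "s' \<in> V" using PV k1 unfolding s'_def by (meson nth_mem subsetD)
      have "s' \<in> nb E (P ! k)" using edge[OF k1] unfolding nb_def s'_def by simp
      moreover have "gdist V E a s' = Suc k" "gdist V E s' b = d - Suc k"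
        using pos[OF k1] unfolding s'_def by auto
      moreover have "gdist V E b s' = gdist V E s' b" using gdist_sym[OF cg s'V bV] .
      ultimately have "{a,b} \<in> S_set V E a s'"
        unfolding S_set_def using ne gdist_self[OF aV] True False k len
        by (intro CollectI conjI exI[of _ a] exI[of _ b] disjI1) auto
      then show ?thesis using \<open>s' \<in> nb E (P ! k)\<close> by blast
    qed
  next
    case False
    show ?thesis
    proof (cases "k = 0")
      case True
      then have "a \<in> nb E (P ! k)" using Pa by (simp add: nb_def)
      then show ?thesis using ab_cov by blast
    next
      case k0: False
      then obtain k' where k': "k = Suc k'" by (cases k) auto
      have k1: "Suc k' < length P" using k k' by simp
      define s' where "s' = P ! k'"
      have s'V: "s' \<in> V" using PV k1 unfolding s'_def by (meson Suc_lessD nth_mem subsetD)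
      have "{P ! k, s'} \<in> E" using edge[OF k1] k' unfolding s'_def by (simp add: insert_commute)
      then have "s' \<in> nb E (P ! k)" unfolding nb_def by simp
      moreover have "gdist V E a s' = k'" using pos[of k'] k1 unfolding s'_def by auto
      moreover have "gdist V E s' a = gdist V E a s'" using gdist_sym[OF cg aV s'V] .
      moreover have "gdist V E s' b = d - k'" using pos[of k'] k1 unfolding s'_def by auto
      ultimately have "{a,b} \<in> S_set V E s' b"
        unfolding S_set_def using ne gdist_self[OF bV] False k' len
        by (intro CollectI conjI exI[of _ a] exI[of _ b] disjI1) auto
      then show ?thesis using \<open>s' \<in> nb E (P ! k)\<close> by blast
    qed
  qed
qed





lemma cls_eq:
  assumes "z \<in> cls E W x" "z \<in> cls E W y"
  shows "cls E W x = cls E W y"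
proof -
  have xz: "(rel W E)\<^sup>*\<^sup>* x z" and yz: "(rel W E)\<^sup>*\<^sup>* y z" using assms unfolding cls_def by auto
  have xy: "(rel W E)\<^sup>*\<^sup>* x y" using rtranclp_trans[OF xz rel_sym[OF yz]] .
  have yx: "(rel W E)\<^sup>*\<^sup>* y x" using rel_sym[OF xy] .
  show ?thesis
  proof (intro set_eqI iffI)
    fix t assume "t \<in> cls E W x"
    then have "(rel W E)\<^sup>*\<^sup>* x t" unfolding cls_def by simp
    then show "t \<in> cls E W y" using rtranclp_trans[OF yx] unfolding cls_def by simp
  next
    fix t assume "t \<in> cls E W y"
    then have "(rel W E)\<^sup>*\<^sup>* y t" unfolding cls_def by simp
    then show "t \<in> cls E W x" using rtranclp_trans[OF xy] unfolding cls_def by simp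
  qed
qed

lemma nb_sub: "simple_graph V E \<Longrightarrow> s \<in> V \<Longrightarrow> nb E s \<subseteq> V"
  unfolding nb_def simple_graph_def by (auto simp: doubleton_eq_iff)

lemma nb_card:
  assumes sg: "simple_graph V E" and s: "s \<in> V"
  shows "card (nb E s) \<le> max_degree V E + 1"
proof -
  have finV: "finite V" using sg by (simp add: simple_graph_def)
  have sub: "{v. {s,v} \<in> E} \<subseteq> V" using nb_sub[OF sg s] unfolding nb_def by blast
  then have fin: "finite {v. {s,v} \<in> E}" using finV finite_subset by blast
  have "card (nb E s) \<le> card {v. {s,v} \<in> E} + 1" unfolding nb_def using fin by (simp add: card_insert_if)
  moreover have "card {v. {s,v} \<in> E} = degree E s" by (simp add: degree_def)
  moreover have "degree E s \<le> max_degree V E" unfolding max_degree_def using finV s by simp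
  ultimately show ?thesis by linarith
qed

lemma NS_card:
  assumes sg: "simple_graph V E" and S: "S \<subseteq> V"
  shows "card (\<Union>s\<in>S. nb E s) \<le> card S * (max_degree V E + 1)"
proof -
  have finS: "finite S" using sg S finite_subset by (auto simp: simple_graph_def)
  have "card (\<Union>s\<in>S. nb E s) \<le> (\<Sum>s\<in>S. card (nb E s))" by (rule card_UN_le[OF finS])
  also have "\<dots> \<le> card S * (max_degree V E + 1)"
    using sum_bounded_above[of S "\<lambda>s. card (nb E s)" "max_degree V E + 1"] nb_card[OF sg] S by auto
  finally show ?thesis .
qed

context
  fixes V E I F B w
  assumes sg: "simple_graph V E" and cg: "connected_graph V E"
    and td: "tree_decomposition V E I F B" and wd: "\<forall>i\<in>I. card (B i) \<le> w + 1"
begin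

definition KK where "KK = 2 * (w + 1) * (max_degree V E + 1)"

lemma finV: "finite V" using sg by (simp add: simple_graph_def)

lemma cover:
  assumes "U \<subseteq> V"
  shows "\<exists>T. T \<subseteq> V \<times> V \<and> finite T \<and>
     (U \<noteq> {} \<longrightarrow> real (card T) \<le> real KK * real (card U) * (log 2 (real (card U)) + 1)) \<and>
     (\<forall>a b P. a \<noteq> b \<and> {a,b} \<notin> E \<and> is_walk V E P \<and> hd P = a \<and> last P = b \<and>
        length P = gdist V E a b + 1 \<and> set P \<subseteq> U \<longrightarrow> (\<exists>p\<in>T. {a,b} \<in> S_set V E (fst p) (snd p)))"
  using assms
proof (induction "card U" arbitrary: U rule: less_induct)
  case less
  show ?case
  proof (cases "U = {}")
    case True
    then show ?thesis by (intro exI[of _ "{}"]) (auto simp: is_walk_def)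
  next
    case Une: False
    have finU: "finite U" using less.prems finV finite_subset by blast
    obtain S where S: "S \<subseteq> U" "card S \<le> w + 1" "\<forall>x\<in>U - S. 2 * card (cls E (U - S) x) \<le> card U"
      using separator[OF td wd finV less.prems] by blast
    define W where "W = U - S"
    define Comps where "Comps = cls E W ` W"
    have finW: "finite W" using finU unfolding W_def by simp
    have finC: "finite Comps" unfolding Comps_def using finW by simp
    have Csub: "C \<subseteq> W" if "C \<in> Comps" for C using that cls_sub unfolding Comps_def by blast
    have Cprops: "C \<subseteq> V \<and> C \<noteq> {} \<and> 2 * card C \<le> card U \<and> card C < card U" if C: "C \<in> Comps" for C
    proof -
      obtain x where x: "x \<in> W" "C = cls E W x" using C unfolding Comps_def by blast
      have "x \<in> C" using x cls_self by simp
      moreover have "finite C" using Csub[OF C] finW finite_subset by blast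
      ultimately have "card C \<ge> 1" by (simp add: Suc_le_eq card_gt_0_iff) blast
      moreover have "2 * card C \<le> card U" using S(3) x unfolding W_def by simp
      ultimately show ?thesis using Csub[OF C] less.prems \<open>x \<in> C\<close> unfolding W_def by auto
    qed
    have "\<forall>C\<in>Comps. \<exists>T. T \<subseteq> V \<times> V \<and> finite T \<and>
     (C \<noteq> {} \<longrightarrow> real (card T) \<le> real KK * real (card C) * (log 2 (real (card C)) + 1)) \<and>
     (\<forall>a b P. a \<noteq> b \<and> {a,b} \<notin> E \<and> is_walk V E P \<and> hd P = a \<and> last P = b \<and>
        length P = gdist V E a b + 1 \<and> set P \<subseteq> C \<longrightarrow> (\<exists>p\<in>T. {a,b} \<in> S_set V E (fst p) (snd p)))"
    proof
      fix C assume C: "C \<in> Comps"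
      have c1: "card C < card U" and c2: "C \<subseteq> V" using Cprops[OF C] by auto
      show "\<exists>T. T \<subseteq> V \<times> V \<and> finite T \<and>
     (C \<noteq> {} \<longrightarrow> real (card T) \<le> real KK * real (card C) * (log 2 (real (card C)) + 1)) \<and>
     (\<forall>a b P. a \<noteq> b \<and> {a,b} \<notin> E \<and> is_walk V E P \<and> hd P = a \<and> last P = b \<and>
        length P = gdist V E a b + 1 \<and> set P \<subseteq> C \<longrightarrow> (\<exists>p\<in>T. {a,b} \<in> S_set V E (fst p) (snd p)))"
        by (rule less.hyps[OF c1 c2])
    qed
    then obtain Tf where Tf: "\<forall>C\<in>Comps. Tf C \<subseteq> V \<times> V \<and> finite (Tf C) \<and>
     (C \<noteq> {} \<longrightarrow> real (card (Tf C)) \<le> real KK * real (card C) * (log 2 (real (card C)) + 1)) \<and>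
     (\<forall>a b P. a \<noteq> b \<and> {a,b} \<notin> E \<and> is_walk V E P \<and> hd P = a \<and> last P = b \<and>
        length P = gdist V E a b + 1 \<and> set P \<subseteq> C \<longrightarrow> (\<exists>p\<in>Tf C. {a,b} \<in> S_set V E (fst p) (snd p)))"
      by (rule bchoice[THEN exE])
    define NS where "NS = (\<Union>s\<in>S. nb E s)"
    define P0 where "P0 = U \<times> NS \<union> NS \<times> U"
    define T where "T = P0 \<union> (\<Union>C\<in>Comps. Tf C)"
    have SV: "S \<subseteq> V" using S less.prems by blast
    have NSV: "NS \<subseteq> V" unfolding NS_def using nb_sub[OF sg] SV by blast
    have finNS: "finite NS" using NSV finV finite_subset by blast
    have TfA: "Tf C \<subseteq> V \<times> V" "finite (Tf C)"
      "C \<noteq> {} \<longrightarrow> real (card (Tf C)) \<le> real KK * real (card C) * (log 2 (real (card C)) + 1)"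
      "\<forall>a b P. a \<noteq> b \<and> {a,b} \<notin> E \<and> is_walk V E P \<and> hd P = a \<and> last P = b \<and>
        length P = gdist V E a b + 1 \<and> set P \<subseteq> C \<longrightarrow> (\<exists>p\<in>Tf C. {a,b} \<in> S_set V E (fst p) (snd p))"
      if CC: "C \<in> Comps" for C
      using bspec[OF Tf CC] by blast+
    have "U \<times> NS \<subseteq> V \<times> V" "NS \<times> U \<subseteq> V \<times> V" using less.prems NSV by auto
    then have "P0 \<subseteq> V \<times> V" unfolding P0_def by blast
    moreover have "(\<Union>C\<in>Comps. Tf C) \<subseteq> V \<times> V" using TfA(1) by blast
    ultimately have TV: "T \<subseteq> V \<times> V" unfolding T_def by blast
    have finP0: "finite P0" unfolding P0_def using finU finNS by simp
    have finT: "finite T" unfolding T_def using finP0 finC TfA(2) by blast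
    have covers: "\<exists>p\<in>T. {a,b} \<in> S_set V E (fst p) (snd p)"
      if H: "a \<noteq> b" "{a,b} \<notin> E" "is_walk V E P" "hd P = a" "last P = b"
        "length P = gdist V E a b + 1" "set P \<subseteq> U" for a b P
    proof -
      have Pne: "P \<noteq> []" using H by (auto simp: is_walk_def)
      have aU: "a \<in> U" using H Pne by (metis hd_in_set subsetD)
      have bU: "b \<in> U" using H Pne by (metis last_in_set subsetD)
      show ?thesis
      proof (cases "\<exists>k<length P. P ! k \<in> S")
        case True
        then obtain k where k: "k < length P" "P ! k \<in> S" by blast
        obtain s' where s': "s' \<in> nb E (P ! k)" "{a,b} \<in> S_set V E a s' \<or> {a,b} \<in> S_set V E s' b"
          using geo_cover[OF cg H(3,4,5,6,1,2) k(1)] by blast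
        have "s' \<in> NS" unfolding NS_def using s'(1) k(2) by blast
        then have "(a, s') \<in> T" "(s', b) \<in> T" unfolding T_def P0_def using aU bU by auto
        then show ?thesis using s'(2) by force
      next
        case False
        then have PW: "set P \<subseteq> W" using H(7) unfolding W_def by (auto simp: in_set_conv_nth)
        then have wW: "is_walk W E P" using H(3) unfolding is_walk_def by blast
        have aW: "a \<in> W" using PW Pne H(4) by (metis hd_in_set subsetD)
        have "set P \<subseteq> cls E W a"
        proof
          fix y assume "y \<in> set P"
          then obtain j where "j < length P" "y = P ! j" by (auto simp: in_set_conv_nth)
          then show "y \<in> cls E W a" using walk_reach_nth[OF wW] H(4) unfolding cls_def by simp
        qed
        moreover have "cls E W a \<in> Comps" unfolding Comps_def using aW by blast
        ultimately obtain p where "p \<in> Tf (cls E W a)" "{a,b} \<in> S_set V E (fst p) (snd p)"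
          using TfA(4)[OF \<open>cls E W a \<in> Comps\<close>] H by blast
        then show ?thesis unfolding T_def using \<open>cls E W a \<in> Comps\<close> by blast
      qed
    qed
    have cP0: "card P0 \<le> KK * card U"
    proof -
      have "card P0 \<le> card (U \<times> NS) + card (NS \<times> U)" unfolding P0_def by (rule card_Un_le)
      also have "\<dots> = 2 * card U * card NS" by (simp add: card_cartesian_product)
      also have "card NS \<le> card S * (max_degree V E + 1)" unfolding NS_def by (rule NS_card[OF sg SV])
      then have "2 * card U * card NS \<le> 2 * card U * ((w+1) * (max_degree V E + 1))"
        using S(2) by (meson le_trans mult_le_cancel1 mult_le_mono1)
      finally show ?thesis unfolding KK_def by (simp add: algebra_simps)
    qed
    have U1: "1 \<le> card U" using finU Une by (simp add: Suc_le_eq card_gt_0_iff)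
    have lgU: "0 \<le> log 2 (real (card U))" using U1 by simp
    have cC: "real (card (Tf C)) \<le> real KK * real (card C) * log 2 (real (card U))" if C: "C \<in> Comps" for C
    proof -
      have cp: "C \<noteq> {}" "2 * card C \<le> card U" using Cprops[OF C] by auto
      have finCC: "finite C" using Csub[OF C] finW finite_subset by blast
      have c1: "1 \<le> card C" using cp finCC by (simp add: Suc_le_eq card_gt_0_iff)
      have "log 2 (real (card C)) + 1 = log 2 (2 * real (card C))"
        using c1 by (simp add: log_mult)
      also have "\<dots> \<le> log 2 (real (card U))" using cp c1 by (subst log_le_cancel_iff) auto
      finally have l: "log 2 (real (card C)) + 1 \<le> log 2 (real (card U))" .
      have "real (card (Tf C)) \<le> real KK * real (card C) * (log 2 (real (card C)) + 1)" using TfA(3)[OF C] cp by blast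
      also have "\<dots> \<le> real KK * real (card C) * log 2 (real (card U))"
        by (rule mult_left_mono[OF l]) simp
      finally show ?thesis .
    qed
    have disj: "pairwise disjnt Comps"
      unfolding pairwise_def disjnt_def Comps_def using cls_eq by blast
    have sumC: "(\<Sum>C\<in>Comps. card C) \<le> card U"
    proof -
      have "(\<Sum>C\<in>Comps. card C) = card (\<Union>Comps)"
        using card_Union_disjoint[OF disj] Csub finW finite_subset by metis
      also have "\<dots> \<le> card U" using Csub finU unfolding W_def by (intro card_mono) auto
      finally show ?thesis .
    qed
    have "card T \<le> card P0 + card (\<Union>C\<in>Comps. Tf C)" unfolding T_def by (rule card_Un_le)
    also have "card (\<Union>C\<in>Comps. Tf C) \<le> (\<Sum>C\<in>Comps. card (Tf C))" by (rule card_UN_le[OF finC])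
    finally have ctn: "card T \<le> card P0 + (\<Sum>C\<in>Comps. card (Tf C))" by simp
    have "real (card T) \<le> real (card P0 + (\<Sum>C\<in>Comps. card (Tf C)))" using ctn by (simp only: of_nat_le_iff)
    then have ct: "real (card T) \<le> real (card P0) + (\<Sum>C\<in>Comps. real (card (Tf C)))"
      by (simp add: of_nat_sum)
    have "(\<Sum>C\<in>Comps. real (card (Tf C))) \<le> (\<Sum>C\<in>Comps. real KK * real (card C) * log 2 (real (card U)))"
      by (rule sum_mono) (rule cC)
    also have "\<dots> = real KK * log 2 (real (card U)) * real (\<Sum>C\<in>Comps. card C)"
      by (simp add: sum_distrib_left sum_distrib_right algebra_simps)
    also have "\<dots> \<le> real KK * log 2 (real (card U)) * real (card U)"
    proof (rule mult_left_mono)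
      show "real (\<Sum>C\<in>Comps. card C) \<le> real (card U)" using sumC by (simp only: of_nat_le_iff)
      show "0 \<le> real KK * log 2 (real (card U))" using lgU by simp
    qed
    finally have s2: "(\<Sum>C\<in>Comps. real (card (Tf C))) \<le> real KK * log 2 (real (card U)) * real (card U)" .
    have "real (card P0) \<le> real (KK * card U)" using cP0 by (simp only: of_nat_le_iff)
    then have p0: "real (card P0) \<le> real KK * real (card U)" by simp
    have "real (card T) \<le> real KK * real (card U) + real KK * log 2 (real (card U)) * real (card U)"
      using ct s2 p0 by linarith
    also have "\<dots> = real KK * real (card U) * (log 2 (real (card U)) + 1)" by (simp add: algebra_simps)
    finally have cT: "real (card T) \<le> real KK * real (card U) * (log 2 (real (card U)) + 1)" .
    show ?thesis
    proof (intro exI[of _ T] conjI impI allI)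
      show "T \<subseteq> V \<times> V" by (rule TV)
      show "finite T" by (rule finT)
      show "real (card T) \<le> real KK * real (card U) * (log 2 (real (card U)) + 1)" by (rule cT)
      fix a b P assume "a \<noteq> b \<and> {a,b} \<notin> E \<and> is_walk V E P \<and> hd P = a \<and> last P = b \<and>
        length P = gdist V E a b + 1 \<and> set P \<subseteq> U"
      then show "\<exists>p\<in>T. {a,b} \<in> S_set V E (fst p) (snd p)" using covers by blast
    qed
  qed
qed

end




lemma final_arith:
  fixes n D w t :: real
  assumes n: "2 \<le> n" and D: "1 \<le> D" and w: "0 \<le> w"
    and t: "t \<le> 2*(w+1)*(D+1)*n*(log 2 n + 1)"
  shows "t \<le> 8/(ln 2)^2 * D * (D + w * ln n) * n * ln n"
proof -
  define L where "L = ln n"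
  define l2 where "l2 = ln (2::real)"
  have l2p: "0 < l2" unfolding l2_def by simp
  have l21: "l2 < 1" unfolding l2_def using ln_2_less_1 .
  have Ll2: "l2 \<le> L" unfolding L_def l2_def using n by simp
  have Lp: "0 < L" using l2p Ll2 by linarith
  have lg: "log 2 n = L / l2" unfolding L_def l2_def log_def by simp
  have lg1: "1 \<le> L / l2" using Ll2 l2p by simp
  have h1: "log 2 n + 1 \<le> 2 * L / l2" using lg lg1 by simp
  have lgnn: "0 \<le> log 2 n + 1" using lg lg1 by simp
  have h2: "D + 1 \<le> 2 * D" using D by simp
  have m: "(D+1)*(log 2 n + 1) \<le> (2*D)*(2*L/l2)"
    by (rule mult_mono[OF h2 h1]) (use D lgnn in auto)
  have "2*(w+1)*(D+1)*n*(log 2 n + 1) = (2*(w+1)*n) * ((D+1)*(log 2 n + 1))"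
    by (simp add: algebra_simps)
  also have "\<dots> \<le> (2*(w+1)*n) * ((2*D)*(2*L/l2))"
    by (rule mult_left_mono[OF m]) (use w n in simp)
  also have "\<dots> = 8*D*(w+1)*n*L/l2"
    by (simp add: field_simps)
  finally have A: "2*(w+1)*(D+1)*n*(log 2 n + 1) \<le> 8*D*(w+1)*n*L/l2" .
  have h3: "l2 * (w+1) \<le> D + w * L"
  proof -
    have "w * l2 \<le> w * L" using Ll2 w by (simp add: mult_left_mono)
    then show ?thesis using l21 D by (simp add: algebra_simps)
  qed
  define Y where "Y = 8/l2^2 * D * n * L"
  have Y0: "0 \<le> Y" unfolding Y_def using D n Lp by simp
  have "Y * (l2 * (w+1)) \<le> Y * (D + w * L)" by (rule mult_left_mono[OF h3 Y0])
  moreover have "Y * (l2 * (w+1)) = 8*D*(w+1)*n*L/l2"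
    unfolding Y_def using l2p by (simp add: field_simps power2_eq_square)
  moreover have "Y * (D + w * L) = 8/(ln 2)^2 * D * (D + w * ln n) * n * ln n"
    unfolding Y_def L_def l2_def by (simp add: algebra_simps)
  ultimately show ?thesis using t A by linarith
qed





lemma c0: "connected_graph {0::nat} {}"
proof -
  have w: "is_walk {0::nat} {} [0]" by (simp add: is_walk_def)
  show ?thesis unfolding connected_graph_def
  proof (intro conjI ballI)
    show "{0::nat} \<noteq> {}" by simp
    fix u v :: nat assume "u \<in> {0}" "v \<in> {0}"
    then show "\<exists>xs. is_walk {0} {} xs \<and> hd xs = u \<and> last xs = v" using w by (intro exI[of _ "[0]"]) simp
  qed
qed
lemma t0: "is_tree {0::nat} {}"
  unfolding is_tree_def using c0 by (simp add: simple_graph_def)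

lemma OPT_le:
  assumes "T \<subseteq> V \<times> V" "finite T" "(\<Union>(u, v)\<in>T. S_set V E u v) = non_edges V E"
  shows "OPT V E \<le> card T"
  unfolding OPT_def by (rule Least_le) (intro exI[of _ T] conjI; use assms in simp)

lemma S_sub: "S_set V E u v \<subseteq> non_edges V E" unfolding S_set_def by blast

lemma main_bound:
  assumes sg: "simple_graph V E" and cg: "connected_graph V E" and n2: "2 \<le> card V"
  shows "real (OPT V E) \<le> 2 * (real (treewidth V E) + 1) * (real (max_degree V E) + 1) *
            real (card V) * (log 2 (real (card V)) + 1)"
proof -
  have finV: "finite V" using sg by (simp add: simple_graph_def)
  have ex: "\<exists>I F B. tree_decomposition V E I F B \<and> decomposition_width I B = decomposition_width {0} (\<lambda>_. V)"
  proof -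
    have e: "\<forall>e\<in>E. \<exists>i\<in>{0::nat}. e \<subseteq> V"
    proof
      fix e assume "e \<in> E"
      then obtain a b where "e = {a,b}" "a \<in> V" "b \<in> V" using sg unfolding simple_graph_def by blast
      then show "\<exists>i\<in>{0::nat}. e \<subseteq> V" by simp
    qed
    have u: "(\<Union>i\<in>{0::nat}. V) = V" by simp
    have c: "\<forall>v\<in>V. connected_graph {i \<in> {0::nat}. v \<in> V} {}"
    proof
      fix v assume "v \<in> V"
      then have "{i \<in> {0::nat}. v \<in> V} = {0}" by simp
      then show "connected_graph {i \<in> {0::nat}. v \<in> V} {}" using c0 by simp
    qed
    have "tree_decomposition V E {0} {} (\<lambda>_. V)"
      unfolding tree_decomposition_def using t0 u e c by (intro conjI) simp_all
    then show ?thesis by (intro exI[of _ "{0}"] exI[of _ "{}"] exI[of _ "\<lambda>_. V"] conjI) simp_all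
  qed
  have "\<exists>I F B. tree_decomposition V E I F B \<and> decomposition_width I B = treewidth V E"
    unfolding treewidth_def by (rule LeastI_ex) (use ex in blast)
  then obtain I F B where td: "tree_decomposition V E I F B" and wdef: "decomposition_width I B = treewidth V E"
    by blast
  have finI: "finite I" using td unfolding tree_decomposition_def is_tree_def simple_graph_def by blast
  have wd: "\<forall>i\<in>I. card (B i) \<le> treewidth V E + 1"
  proof
    fix i assume i: "i \<in> I"
    have "card (B i) \<le> Max ((\<lambda>i. card (B i)) ` I)" using finI i by simp
    then show "card (B i) \<le> treewidth V E + 1" using wdef unfolding decomposition_width_def by linarith
  qed
  obtain T where T: "T \<subseteq> V \<times> V" "finite T"
    "V \<noteq> {} \<longrightarrow> real (card T) \<le> real (KK V E (treewidth V E)) * real (card V) * (log 2 (real (card V)) + 1)"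
    "\<forall>a b P. a \<noteq> b \<and> {a,b} \<notin> E \<and> is_walk V E P \<and> hd P = a \<and> last P = b \<and>
        length P = gdist V E a b + 1 \<and> set P \<subseteq> V \<longrightarrow> (\<exists>p\<in>T. {a,b} \<in> S_set V E (fst p) (snd p))"
    using cover[OF sg cg td wd subset_refl] by blast
  have "(\<Union>(u, v)\<in>T. S_set V E u v) = non_edges V E"
  proof
    show "(\<Union>(u, v)\<in>T. S_set V E u v) \<subseteq> non_edges V E" using S_sub by blast
    show "non_edges V E \<subseteq> (\<Union>(u, v)\<in>T. S_set V E u v)"
    proof
      fix q assume "q \<in> non_edges V E"
      then obtain a b where ab: "q = {a,b}" "a \<in> V" "b \<in> V" "a \<noteq> b" "{a,b} \<notin> E"
        unfolding non_edges_def by blast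
      obtain P where P: "is_walk V E P" "hd P = a" "last P = b" "length P = gdist V E a b + 1"
        using gdist_ex[OF cg ab(2,3)] by blast
      have "set P \<subseteq> V" using P(1) by (simp add: is_walk_def)
      then obtain p where "p \<in> T" "{a,b} \<in> S_set V E (fst p) (snd p)" using T(4) P ab by blast
      then show "q \<in> (\<Union>(u, v)\<in>T. S_set V E u v)" using ab(1) by (cases p) auto
    qed
  qed
  then have "OPT V E \<le> card T" by (rule OPT_le[OF T(1,2)])
  moreover have "V \<noteq> {}" using n2 by auto
  moreover have "real (KK V E (treewidth V E)) = 2 * (real (treewidth V E) + 1) * (real (max_degree V E) + 1)"
    unfolding KK_def[OF sg cg td wd] by (simp add: algebra_simps)
  ultimately show ?thesis using T(3) by (metis of_nat_le_iff order_trans)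
qed


lemma maxdeg_ge1:
  assumes sg: "simple_graph V E" and cg: "connected_graph V E" and n2: "2 \<le> card V"
  shows "1 \<le> max_degree V E"
proof -
  have finV: "finite V" using sg by (simp add: simple_graph_def)
  have "card V > 0" using n2 by simp
  then have "V \<noteq> {}" by (simp add: card_gt_0_iff)
  then obtain a where a: "a \<in> V" by blast
  have "card (V - {a}) \<ge> 1" using n2 a finV by (simp add: card_Diff_singleton)
  then have "card (V - {a}) > 0" by simp
  then have "V - {a} \<noteq> {}" by (simp add: card_gt_0_iff)
  then obtain b where b: "b \<in> V" "b \<noteq> a" by blast
  have "\<exists>z. {a,z} \<in> E"
  proof (cases "{a,b} \<in> E")
    case True then show ?thesis by blast
  next
    case False
    have g2: "2 \<le> gdist V E a b" by (rule gdist_ge2[OF cg a b(1)]) (use b False in auto)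
    obtain P where P: "is_walk V E P" "hd P = a" "last P = b" "length P = gdist V E a b + 1"
      using gdist_ex[OF cg a b(1)] by blast
    have "Suc 0 < length P" using P(4) g2 by simp
    then have "{P ! 0, P ! Suc 0} \<in> E" using P(1) unfolding is_walk_def by simp
    moreover have "P ! 0 = a" using P(2) \<open>Suc 0 < length P\<close> by (cases P) auto
    ultimately show ?thesis by auto
  qed
  then obtain z where z: "{a,z} \<in> E" by blast
  have sub: "{v. {a,v} \<in> E} \<subseteq> V" using nb_sub[OF sg a] unfolding nb_def by blast
  then have fin: "finite {v. {a,v} \<in> E}" using finV finite_subset by blast
  have "z \<in> {v. {a,v} \<in> E}" using z by simp
  then have "1 \<le> degree E a" unfolding degree_def using fin by (simp add: Suc_le_eq card_gt_0_iff) blast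
  also have "degree E a \<le> max_degree V E" unfolding max_degree_def using finV a by simp
  finally show ?thesis .
qed

theorem theorem7:
  "\<exists>C::real. C > 0 \<and>
     (\<forall>(V::nat set) (E::nat set set). simple_graph V E \<and> connected_graph V E \<longrightarrow>
        real (OPT V E) \<le> C * real (max_degree V E) *
          (real (max_degree V E) + real (treewidth V E) * ln (real (card V))) *
          real (card V) * ln (real (card V)))"
proof (intro exI[of _ "8/(ln 2)^2"] conjI allI impI)
  show "(0::real) < 8 / (ln 2)\<^sup>2" by simp
  fix V :: "nat set" and E :: "nat set set"
  assume "simple_graph V E \<and> connected_graph V E"
  then have sg: "simple_graph V E" and cg: "connected_graph V E" by auto
  have finV: "finite V" using sg by (simp add: simple_graph_def)
  show "real (OPT V E) \<le> 8 / (ln 2)\<^sup>2 * real (max_degree V E) *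
          (real (max_degree V E) + real (treewidth V E) * ln (real (card V))) *
          real (card V) * ln (real (card V))"
  proof (cases "2 \<le> card V")
    case True
    have n2: "2 \<le> real (card V)" using True by simp
    have D1: "1 \<le> real (max_degree V E)" using maxdeg_ge1[OF sg cg True] by simp
    show ?thesis
      by (rule final_arith[OF n2 D1 _ main_bound[OF sg cg True]]) simp
  next
    case False
    have "V \<noteq> {}" using cg unfolding connected_graph_def by blast
    then have "card V > 0" using finV by (simp add: card_gt_0_iff)
    then have "card V = 1" using False by simp
    then obtain x where x: "V = {x}" by (meson card_1_singletonE)
    have ne: "non_edges V E = {}" unfolding non_edges_def x by auto
    have "OPT V E \<le> card ({} :: (nat \<times> nat) set)" by (rule OPT_le) (use ne in auto)
    then have "OPT V E = 0" by simp
    then show ?thesis using \<open>card V = 1\<close> by simp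
  qed
qed



end
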